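(* Let $r \ge 3$ and $b \in \{0,1\}$. For $n \ge 1$ let $g^{b\text{-}\mathrm{ff}}_r(n)$ be the maximum cardinality of a family $\mathcal{F} \subseteq \{0,1\}^n$ containing no $b$-focal family of size $r$. Then for every $n$, $$g^{b\text{-}\mathrm{ff}}_r(n) \le (r-1)\sum_{k=0}^n \frac{\binom{n}{\lceil \frac{(r-2)k}{r-1}\rceil}}{\binom{k}{\lceil \frac{(r-2)k}{r-1}\rceil}},$$ and this sum equals $\left(1 + \frac{r-2}{(r-1)^{\frac{r-1}{r-2}}} + o(1)\right)^n$ as $n \to \infty$.
   Context: For $b \in \{0,1\}$, a family $x^{(0)}, x^{(1)}, \dots, x^{(r-1)}$ of $r$ distinct vectors in $\{0,1\}^n$ is $b$-focal with focus $x^{(0)}$ if for every coordinate $i \in [n]$ with $x^{(0)}_i = b$, at least $r-2$ of the $r-1$ entries $x^{(1)}_i, \dots, x^{(r-1)}_i$ are equal to $b$. A family contains a $b$-focal family of size $r$ if some $r$ distinct members, with some choice of focus among them, form a $b$-focal family. *)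

theory Defs
  imports Complex_Main
begin

text \<open>Vectors in the cube {0,1}^n are represented as boolean lists of length n;
  the bit b in {0,1} is represented by a boolean (True = 1, False = 0).\<close>

definition cube :: "nat \<Rightarrow> bool list set" where
  "cube n = {xs. length xs = n}"

definition is_focal :: "bool \<Rightarrow> nat \<Rightarrow> bool list \<Rightarrow> bool list list \<Rightarrow> bool" where
  "is_focal b n x0 xs \<longleftrightarrow>
     distinct (x0 # xs) \<and>
     (\<forall>i<n. x0 ! i = b \<longrightarrow>
        length xs - 1 \<le> card {j. j < length xs \<and> (xs ! j) ! i = b})"

definition contains_focal :: "bool \<Rightarrow> nat \<Rightarrow> nat \<Rightarrow> bool list set \<Rightarrow> bool" where
  "contains_focal b r n F \<longleftrightarrow>
     (\<exists>x0 xs. x0 \<in> F \<and> set xs \<subseteq> F \<and> length xs = r - 1 \<and> is_focal b n x0 xs)"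

definition g_ff :: "bool \<Rightarrow> nat \<Rightarrow> nat \<Rightarrow> nat" where
  "g_ff b r n = Max {card F | F. F \<subseteq> cube n \<and> \<not> contains_focal b r n F}"

definition focal_sum :: "nat \<Rightarrow> nat \<Rightarrow> real" where
  "focal_sum r n = (\<Sum>k = 0..n.
     let c = nat \<lceil>real (r - 2) * real k / real (r - 1)\<rceil>
     in real (n choose c) / real (k choose c))"

end

theory Submission
  imports Defs "HOL-Combinatorics.Permutations"
begin


lemma binom_term_le:
  fixes a b :: real
  assumes "a \<ge> 0" "b \<ge> 0" "j \<le> N"
  shows "real (N choose j) * a^j * b^(N-j) \<le> (a+b)^N"
proof -
  have "(a+b)^N = (\<Sum>k\<le>N. real (N choose k) * a^k * b^(N-k))"
    by (rule binomial_ring)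
  moreover have "real (N choose j) * a^j * b^(N-j) \<le> (\<Sum>k\<le>N. real (N choose k) * a^k * b^(N-k))"
    by (rule member_le_sum) (use assms in auto)
  ultimately show ?thesis by simp
qed

lemma binom_step: "Suc i * (N choose Suc i) = (N - i) * (N choose i)"
  by (metis binomial_absorb_comp binomial_absorption)

lemma binom_shift_le: "(n choose (j + s)) \<le> n^s * (n choose j)"
proof (induction s)
  case 0 then show ?case by simp
next
  case (Suc s)
  have "Suc (j+s) * (n choose Suc (j+s)) = (n - (j+s)) * (n choose (j+s))"
    by (rule binom_step)
  also have "\<dots> \<le> n * (n choose (j+s))" by simp
  finally have h: "Suc (j+s) * (n choose Suc (j+s)) \<le> n * (n choose (j+s))" .
  have "(n choose Suc (j+s)) \<le> Suc (j+s) * (n choose Suc (j+s))" by simp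
  also note h
  finally have "(n choose Suc (j+s)) \<le> n * (n choose (j+s))" .
  also have "\<dots> \<le> n * (n^s * (n choose j))" using Suc by simp
  finally show ?case by (simp add: mult.assoc)
qed

lemma mode_lemma:
  fixes q m :: nat
  assumes q: "q \<ge> 2" and i: "i \<le> q*m"
  shows "(q*m choose i) * (q-1)^(q*m-i) \<le> (q*m choose m) * (q-1)^(q*m-m)"
proof -
  define N where "N = q*m"
  define a where "a i = (N choose i) * (q-1)^(N-i)" for i
  have step: "a (Suc i) * (Suc i * (q-1)) = a i * (N - i)" if "i < N" for i
  proof -
    have "a (Suc i) * (Suc i * (q-1)) = (Suc i * (N choose Suc i)) * ((q-1)^(N - Suc i) * (q-1))"
      by (simp add: a_def algebra_simps)
    also have "(q-1)^(N - Suc i) * (q-1) = (q-1)^(N-i)"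
      using that by (metis Suc_diff_Suc power_Suc2)
    also have "Suc i * (N choose Suc i) = (N - i) * (N choose i)" by (rule binom_step)
    finally show ?thesis by (simp add: a_def algebra_simps)
  qed
  have mq: "m \<le> q*m" using q by simp
  have up: "a i \<le> a (Suc i)" if "i < m" for i
  proof -
    have "Suc i * q \<le> m * q" using that by (intro mult_le_mono1) simp
    hence "Suc i * q \<le> q * m" by (simp add: mult.commute)
    hence le: "Suc i * (q-1) \<le> N - i" unfolding N_def
      by (simp only: diff_mult_distrib2 mult_1_right; linarith)
    have "i < N" using less_le_trans[OF that mq] unfolding N_def .
    have "a i * (Suc i * (q-1)) \<le> a i * (N - i)" using le by (rule mult_le_mono2)
    also have "\<dots> = a (Suc i) * (Suc i * (q-1))" using step[OF \<open>i < N\<close>] by simp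
    finally have "a i * (Suc i * (q-1)) \<le> a (Suc i) * (Suc i * (q-1))" .
    moreover have "Suc i * (q-1) > 0" using q by simp
    ultimately show ?thesis using mult_le_cancel2 by blast
  qed
  have down: "a (Suc i) \<le> a i" if "m \<le> i" "i < N" for i
  proof -
    have "q * m \<le> q * i" using that by simp
    moreover have "Suc i * q = i * q + q" by simp
    moreover have "q * i = i * q" by (simp add: mult.commute)
    ultimately have le: "N - i \<le> Suc i * (q-1)" using q unfolding N_def
      by (simp only: diff_mult_distrib2 mult_1_right; linarith)
    have "a (Suc i) * (Suc i * (q-1)) = a i * (N - i)" by (rule step[OF that(2)])
    also have "\<dots> \<le> a i * (Suc i * (q-1))" using le by (rule mult_le_mono2)
    finally have "a (Suc i) * (Suc i * (q-1)) \<le> a i * (Suc i * (q-1))" .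
    moreover have "Suc i * (q-1) > 0" using q by simp
    ultimately show ?thesis using mult_le_cancel2 by blast
  qed
  show ?thesis
  proof (cases "i \<le> m")
    case True
    have "a i \<le> a m"
      using True
    proof (induction m rule: dec_induct)
      case base then show ?case by simp
    next
      case (step n) then show ?case using up[of n] by simp
    qed
    thus ?thesis unfolding a_def N_def .
  next
    case False
    have "a i \<le> a m"
      using False[unfolded not_le] less_imp_le
    proof -
      have "m \<le> i" using False by simp
      then show ?thesis
      proof (induction i rule: dec_induct)
        case base then show ?case by simp
      next
        case (step n)
        have "n < N" using step.hyps(2) i unfolding N_def by simp
        then show ?case using down[of n] step by simp
      qed
    qed
    thus ?thesis unfolding a_def N_def .
  qed
qed


lemma lowbinom:
  fixes q m :: nat
  assumes q: "q \<ge> 2"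
  shows "real q ^ (q*m) \<le> real (q*m+1) * real (q*m choose m) * real (q-1)^((q-1)*m)"
proof -
  define N where "N = q*m"
  have "q ^ N = (1 + (q-1)) ^ N" using q by simp
  also have "\<dots> = (\<Sum>i\<le>N. (N choose i) * 1^i * (q-1)^(N-i))"
    by (subst binomial_ring) simp
  also have "\<dots> \<le> (\<Sum>i\<le>N. (N choose m) * (q-1)^(N-m))"
    by (rule sum_mono) (use mode_lemma[OF q] in \<open>auto simp: N_def\<close>)
  also have "\<dots> = (N+1) * ((N choose m) * (q-1)^(N-m))" by simp
  finally have "q ^ N \<le> (N+1) * ((N choose m) * (q-1)^(N-m))" .
  moreover have "N - m = (q-1)*m" unfolding N_def by (simp add: diff_mult_distrib)
  ultimately have "q ^ N \<le> (N+1) * (N choose m) * (q-1)^((q-1)*m)" by (metis mult.assoc)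
  hence "real (q ^ N) \<le> real ((N+1) * (N choose m) * (q-1)^((q-1)*m))" by linarith
  thus ?thesis unfolding N_def by (simp only: of_nat_mult of_nat_power)
qed

lemma upbinom:
  fixes q k m :: nat
  assumes "m \<le> k" "q \<ge> 1"
  shows "(k choose m) * (q-1)^(k-m) \<le> q^k"
proof -
  have "(k choose m) * 1^m * (q-1)^(k-m) \<le> (\<Sum>i\<le>k. (k choose i) * 1^i * (q-1)^(k-i))"
    by (rule member_le_sum) (use assms in auto)
  also have "\<dots> = (1 + (q-1))^k" by (subst binomial_ring) simp
  finally show ?thesis using assms by simp
qed

definition xq :: "nat \<Rightarrow> real" where
  "xq q = real (q-1) / real q powr (real q / real (q-1))"

lemma xq_pos: "q \<ge> 2 \<Longrightarrow> xq q > 0"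
  unfolding xq_def by auto

lemma xq_pow:
  assumes q: "q \<ge> 2"
  shows "xq q ^ (q-1) * real q ^ q = real (q-1) ^ (q-1)"
proof -
  have qp: "real q > 0" using q by simp
  have "(real q powr (real q / real (q-1))) ^ (q-1) = (real q powr (real q / real (q-1))) powr real (q-1)"
    by (rule powr_realpow[symmetric]) (use q in simp)
  also have "\<dots> = real q powr (real q)"
    using q by (simp add: powr_powr)
  also have "\<dots> = real q ^ q" by (rule powr_realpow) (use q in simp)
  finally have h: "(real q powr (real q / real (q-1))) ^ (q-1) = real q ^ q" .
  have "xq q ^ (q-1) = real (q-1) ^ (q-1) / real q ^ q"
    unfolding xq_def power_divide h ..
  thus ?thesis using qp by simp
qed

lemma xq_le1:
  assumes q: "q \<ge> 2"
  shows "xq q \<le> 1"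
proof -
  have "real (q-1) ^ (q-1) \<le> real q ^ (q-1)" by (intro power_mono) auto
  also have "\<dots> \<le> real q ^ q" using q by (intro power_increasing) auto
  finally have "xq q ^ (q-1) * real q ^ q \<le> 1 * real q ^ q" using xq_pow[OF q] by simp
  hence "xq q ^ (q-1) \<le> 1" using q by (simp add: mult_le_cancel_right)
  thus ?thesis using q xq_pos[OF q] by (simp add: power_le_one_iff)
qed

lemma xq_powm:
  assumes q: "q \<ge> 2"
  shows "xq q ^ ((q-1)*m) * real q ^ (q*m) = real (q-1) ^ ((q-1)*m)"
proof -
  have "xq q ^ ((q-1)*m) * real q ^ (q*m) = (xq q ^ (q-1) * real q ^ q) ^ m"
    by (simp add: power_mult power_mult_distrib)
  also have "\<dots> = (real (q-1) ^ (q-1)) ^ m" by (simp only: xq_pow[OF q])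
  also have "\<dots> = real (q-1) ^ ((q-1)*m)" by (simp only: power_mult)
  finally show ?thesis .
qed


lemma term_upper:
  fixes q n k :: nat
  assumes q: "q \<ge> 2" and n: "n \<ge> 1" and k: "k \<le> n"
  shows "real (n choose (k - k div q)) / real (k choose (k - k div q))
           \<le> real n ^ q * real (n+1) * (1 + xq q)^n"
proof -
  define m where "m = k div q"
  define s where "s = k mod q"
  have kq: "k = q*m + s" unfolding m_def s_def by simp
  have sq: "s < q" unfolding s_def using q by simp
  have mqm: "m \<le> q*m" using q by simp
  have c: "k - k div q = (q-1)*m + s" unfolding m_def[symmetric] using kq mqm
    by (simp add: diff_mult_distrib)
  define x where "x = xq q"
  have xp: "x > 0" unfolding x_def using xq_pos[OF q] .
  define A where "A = real (n choose (k - k div q))"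
  define B where "B = real (k choose (k - k div q))"
  define D where "D = real (q*m choose m)"
  define E where "E = real (n choose ((q-1)*m))"
  define X where "X = x ^ ((q-1)*m)"
  define P where "P = (1 + x)^n"
  have mk: "m \<le> k" unfolding m_def by simp
  have qmk: "q*m \<le> k" using kq by simp
  have Dp: "D > 0" unfolding D_def using mqm by simp
  have "k choose (k - k div q) = k choose m" unfolding m_def by (rule binomial_symmetric[symmetric]) simp
  hence DB: "D \<le> B" unfolding D_def B_def using binomial_right_mono[OF qmk] by simp
  have A0: "A \<ge> 0" unfolding A_def by simp
  have "n choose (k - k div q) \<le> n^s * (n choose ((q-1)*m))" unfolding c by (rule binom_shift_le)
  also have "\<dots> \<le> n^q * (n choose ((q-1)*m))"
    using n sq by (intro mult_le_mono1 power_increasing) auto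
  finally have AE: "A \<le> real n ^ q * E" unfolding A_def E_def
    by (metis of_nat_le_iff of_nat_mult of_nat_power)
  have "(q-1)*m \<le> n" using c k by linarith
  hence EX: "E * X \<le> P" unfolding E_def X_def P_def
    using binom_term_le[of x 1 "(q-1)*m" n] xp by (simp add: add.commute)
  have Xp: "X > 0" unfolding X_def using xp by simp
  have "real q ^ (q*m) \<le> real (q*m+1) * D * real (q-1)^((q-1)*m)"
    unfolding D_def by (rule lowbinom[OF q])
  also have "real (q-1)^((q-1)*m) = X * real q ^ (q*m)"
    unfolding X_def x_def using xq_powm[OF q, of m] by simp
  finally have "1 * real q ^ (q*m) \<le> (real (q*m+1) * D * X) * real q ^ (q*m)"
    by (simp add: mult.assoc)
  hence DX: "1 \<le> real (q*m+1) * D * X" using q by (subst (asm) mult_le_cancel_right) auto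
  have "A / B \<le> A / D" using A0 Dp DB by (intro divide_left_mono) auto
  also have "\<dots> \<le> real n ^ q * E / D" using AE Dp by (intro divide_right_mono) auto
  also have "\<dots> = real n ^ q * (E * X) / (D * X)" using Xp by simp
  also have "\<dots> \<le> real n ^ q * P / (D * X)" using EX Dp Xp
    by (intro divide_right_mono mult_left_mono) auto
  also have "\<dots> \<le> real n ^ q * P * real (q*m+1)"
  proof -
    have "real n ^ q * P * 1 \<le> real n ^ q * P * (real (q*m+1) * D * X)"
      using DX by (intro mult_left_mono) (auto simp: P_def xp less_imp_le)
    thus ?thesis using Dp Xp by (simp add: divide_simps mult.assoc mult.commute mult.left_commute)
  qed
  also have "\<dots> \<le> real n ^ q * P * real (n+1)"
  proof -
    have "q*m+1 \<le> n+1" using qmk k by simp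
    hence "real (q*m+1) \<le> real (n+1)" by (simp only: of_nat_le_iff)
    thus ?thesis by (intro mult_left_mono) (auto simp: P_def xp less_imp_le)
  qed
  finally show ?thesis unfolding A_def B_def P_def x_def by (simp add: mult.commute mult.left_commute)
qed


lemma term_lower:
  fixes q n k :: nat
  assumes q: "q \<ge> 2"
  shows "real (n choose (k - k div q)) * xq q ^ (k - k div q) / real q ^ q
           \<le> real (n choose (k - k div q)) / real (k choose (k - k div q))"
proof -
  define m where "m = k div q"
  define s where "s = k mod q"
  define c where "c = k - k div q"
  have kq: "k = q*m + s" unfolding m_def s_def by simp
  have sq: "s < q" unfolding s_def using q by simp
  have mqm: "m \<le> q*m" using q by simp
  have c: "c = (q-1)*m + s" unfolding c_def m_def[symmetric] using kq mqm
    by (simp add: diff_mult_distrib)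
  define x where "x = xq q"
  have xp: "x > 0" unfolding x_def using xq_pos[OF q] .
  have x1: "x \<le> 1" unfolding x_def using xq_le1[OF q] .
  define C where "C = real (k choose c)"
  have "k choose c = k choose m" unfolding c_def m_def by (rule binomial_symmetric[symmetric]) simp
  hence Cm: "C = real (k choose m)" unfolding C_def by simp
  have Cp: "C > 0" unfolding C_def c_def by simp
  have km: "k - m = c" unfolding c_def m_def ..
  have "(k choose m) * (q-1)^(k-m) \<le> q^k" by (rule upbinom) (use q in \<open>auto simp: m_def\<close>)
  hence up: "C * real (q-1)^c \<le> real q ^ k" unfolding Cm km
    by (metis of_nat_le_iff of_nat_mult of_nat_power)
  have q1p: "real (q-1) ^ c > 0" using q by simp
  have "x ^ c \<le> x ^ ((q-1)*m)" using xp x1 c by (intro power_decreasing) auto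
  hence "x ^ c * C * real (q-1)^c \<le> x ^ ((q-1)*m) * (C * real (q-1)^c)"
    using Cp q1p by (simp add: mult.assoc)
  also have "\<dots> \<le> x ^ ((q-1)*m) * real q ^ k" using up xp by (intro mult_left_mono) auto
  also have "\<dots> = (x ^ ((q-1)*m) * real q ^ (q*m)) * real q ^ s" unfolding kq by (simp add: power_add)
  also have "\<dots> = real (q-1) ^ ((q-1)*m) * real q ^ s" unfolding x_def using xq_powm[OF q] by simp
  also have "\<dots> \<le> real (q-1)^c * real q ^ q"
  proof (rule mult_mono)
    show "real (q-1) ^ ((q-1)*m) \<le> real (q-1)^c" using q c by (intro power_increasing) auto
    show "real q ^ s \<le> real q ^ q" using q sq by (intro power_increasing) auto
  qed auto
  finally have "(x ^ c * C) * real (q-1)^c \<le> real q ^ q * real (q-1)^c" by (simp add: mult.commute)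
  hence key: "x ^ c * C \<le> real q ^ q" using q1p by (subst (asm) mult_le_cancel_right) auto
  have A0: "real (n choose c) \<ge> 0" by simp
  have "real (n choose c) * x ^ c * C \<le> real (n choose c) * real q ^ q"
    using mult_left_mono[OF key A0] by (simp add: mult.assoc)
  hence "real (n choose c) * x ^ c / real q ^ q \<le> real (n choose c) / C"
    using Cp q by (simp add: divide_simps)
  thus ?thesis unfolding c_def C_def x_def .
qed

lemma tail_le:
  fixes x :: real
  assumes "0 < x" "x \<le> 1" "n \<le> 2*c" "c \<le> i"
  shows "real (n choose i) * x ^ i \<le> real (n choose c) * x ^ c"
  using assms(4)
proof (induction i rule: dec_induct)
  case base then show ?case by simp
next
  case (step i)
  have "Suc i * (n choose Suc i) = (n - i) * (n choose i)" by (rule binom_step)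
  also have "\<dots> \<le> Suc i * (n choose i)" using assms step.hyps by (intro mult_le_mono1) linarith
  finally have "n choose Suc i \<le> n choose i" by (subst (asm) mult_le_cancel1) simp
  hence "real (n choose Suc i) * x ^ Suc i \<le> real (n choose i) * x ^ i"
    using assms by (intro mult_mono power_decreasing) auto
  thus ?case using step.IH by linarith
qed

lemma cf_ivt:
  fixes q :: nat
  assumes "q \<ge> 1"
  shows "j \<le> n - n div q \<Longrightarrow> \<exists>k\<le>n. k - k div q = j"
proof (induction n arbitrary: j)
  case 0 then show ?case by simp
next
  case (Suc n)
  have "Suc n div q = n div q \<or> Suc n div q = Suc (n div q)"
    by (simp add: div_Suc)
  moreover have "n div q \<le> n" by simp
  ultimately have "Suc n - Suc n div q = n - n div q \<or> Suc n - Suc n div q = Suc (n - n div q)"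
    by auto
  then show ?case
  proof
    assume h: "Suc n - Suc n div q = n - n div q"
    then obtain k where "k \<le> n" "k - k div q = j" using Suc by auto
    then show ?case by (intro exI[of _ k]) auto
  next
    assume h: "Suc n - Suc n div q = Suc (n - n div q)"
    show ?case
    proof (cases "j = Suc n - Suc n div q")
      case True then show ?thesis by (intro exI[of _ "Suc n"]) auto
    next
      case False
      then obtain k where "k \<le> n" "k - k div q = j" using Suc h by (metis le_SucE)
      then show ?thesis by (intro exI[of _ k]) auto
    qed
  qed
qed


definition fs :: "nat \<Rightarrow> nat \<Rightarrow> real" where
  "fs q n = (\<Sum>k=0..n. real (n choose (k - k div q)) / real (k choose (k - k div q)))"

lemma fs_upper:
  assumes q: "q \<ge> 2" and n: "n \<ge> 1"
  shows "fs q n \<le> real (n+1) ^ (q+2) * (1 + xq q)^n"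
proof -
  have P0: "(1 + xq q)^n \<ge> 0" using xq_pos[OF q] by simp
  have "fs q n \<le> (\<Sum>k=0..n. real n ^ q * real (n+1) * (1 + xq q)^n)"
    unfolding fs_def by (rule sum_mono) (use term_upper[OF q n] in auto)
  also have "\<dots> = real (n+1) * (real n ^ q * real (n+1) * (1 + xq q)^n)" by simp
  also have "\<dots> \<le> real (n+1) * (real (n+1) ^ q * real (n+1) * (1 + xq q)^n)"
    using P0 by (intro mult_left_mono mult_right_mono power_mono) auto
  also have "\<dots> = real (n+1) ^ (q+2) * (1 + xq q)^n" by (simp add: power_add power2_eq_square)
  finally show ?thesis .
qed

lemma fs_lower:
  assumes q: "q \<ge> 2"
  shows "(1 + xq q)^n \<le> real (n+1) * real q ^ q * fs q n"
proof -
  define x where "x = xq q"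
  have xp: "x > 0" unfolding x_def using xq_pos[OF q] .
  have x1: "x \<le> 1" unfolding x_def using xq_le1[OF q] .
  define cn where "cn = n - n div q"
  define a where "a i = real (n choose i) * x ^ i" for i
  have fin: "finite (a ` {..cn})" by simp
  obtain j0 where j0: "j0 \<le> cn" "a j0 = Max (a ` {..cn})"
  proof -
    have "Max (a ` {..cn}) \<in> a ` {..cn}" using Max_in[OF fin] by auto
    then obtain j where "j \<in> {..cn}" "Max (a ` {..cn}) = a j" by (rule imageE)
    thus ?thesis using that by auto
  qed
  have amax: "a j \<le> a j0" if "j \<le> cn" for j using j0 that fin by simp
  have "n div q \<le> n div 2" using q by (simp add: div_le_mono2)
  hence n2: "n \<le> 2 * cn" unfolding cn_def by linarith
  have all: "a i \<le> a j0" if "i \<le> n" for i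
  proof (cases "i \<le> cn")
    case True then show ?thesis by (rule amax)
  next
    case False
    have "a i \<le> a cn" unfolding a_def using False by (intro tail_le xp x1 n2) auto
    also have "\<dots> \<le> a j0" by (rule amax) simp
    finally show ?thesis .
  qed
  have "(1 + x)^n = (x + 1)^n" by (simp add: add.commute)
  also have "\<dots> = (\<Sum>i\<le>n. real (n choose i) * x^i * 1^(n-i))" by (rule binomial_ring)
  also have "\<dots> = (\<Sum>i\<le>n. a i)" unfolding a_def by simp
  also have "\<dots> \<le> (\<Sum>i\<le>n. a j0)" by (rule sum_mono) (use all in auto)
  also have "\<dots> = real (n+1) * a j0" by simp
  finally have h1: "(1 + x)^n \<le> real (n+1) * a j0" .
  obtain k where k: "k \<le> n" "k - k div q = j0" using cf_ivt[of q j0 n] q j0(1) unfolding cn_def by auto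
  have "a j0 / real q ^ q \<le> real (n choose (k - k div q)) / real (k choose (k - k div q))"
    using term_lower[OF q, of n k] unfolding a_def x_def k(2) .
  also have "\<dots> \<le> fs q n" unfolding fs_def
    by (rule member_le_sum) (use k in auto)
  finally have "a j0 \<le> real q ^ q * fs q n" using q by (simp add: divide_simps mult.commute)
  hence h2: "real (n+1) * a j0 \<le> real (n+1) * (real q ^ q * fs q n)" by (intro mult_left_mono) auto
  have "(1 + x)^n \<le> real (n+1) * (real q ^ q * fs q n)" using order_trans[OF h1 h2] .
  thus ?thesis unfolding x_def by (simp only: mult.assoc)
qed


lemma ell_lim: "(\<lambda>n. ln (real n + 1) / real n) \<longlonglongrightarrow> 0"
proof -
  have g0: "(\<lambda>n. ln (real n) / real n) \<longlonglongrightarrow> 0"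
    using filterlim_compose[OF ln_x_over_x_tendsto_0 filterlim_real_sequentially] by simp
  have g: "(\<lambda>n. ln (real (Suc n)) / real (Suc n)) \<longlonglongrightarrow> 0"
    using LIMSEQ_Suc[OF g0] .
  have h: "(\<lambda>n. 2 * (ln (real (Suc n)) / real (Suc n))) \<longlonglongrightarrow> 0"
    using tendsto_mult[OF tendsto_const g, of 2] by simp
  show ?thesis
  proof (rule tendsto_sandwich[OF _ _ tendsto_const h])
    show "\<forall>\<^sub>F n in sequentially. 0 \<le> ln (real n + 1) / real n"
      by (rule always_eventually) simp
    show "\<forall>\<^sub>F n in sequentially. ln (real n + 1) / real n \<le> 2 * (ln (real (Suc n)) / real (Suc n))"
      using eventually_ge_at_top[of 1]
    proof eventually_elim
      case (elim n)
      have l0: "ln (real n + 1) \<ge> 0" by simp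
      have "ln (real n + 1) * (real n + 1) \<le> ln (real n + 1) * (2 * real n)"
        using elim l0 by (intro mult_left_mono) auto
      thus ?case using elim by (simp add: divide_simps add.commute mult.commute mult.left_commute)
    qed
  qed
qed

lemma const_over_n: "(\<lambda>n. c / real n) \<longlonglongrightarrow> 0"
  by (rule tendsto_divide_0[OF tendsto_const filterlim_at_top_imp_at_infinity[OF filterlim_real_sequentially]])

lemma fs_lim:
  assumes q: "q \<ge> 2"
  shows "(\<lambda>n. fs q n powr (1 / real n)) \<longlonglongrightarrow> 1 + xq q"
proof -
  define x where "x = xq q"
  have xp: "x > 0" unfolding x_def using xq_pos[OF q] .
  define l where "l n = ln (real n + 1) / real n" for n
  have l0: "l \<longlonglongrightarrow> 0" unfolding l_def by (rule ell_lim)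
  define lo where "lo n = exp (ln (1+x) - l n - real q * ln (real q) / real n)" for n
  define hi where "hi n = exp (ln (1+x) + real (q+2) * l n)" for n
  have "lo \<longlonglongrightarrow> exp (ln (1+x) - 0 - 0)" unfolding lo_def
    by (intro tendsto_intros l0 const_over_n)
  hence lo_lim: "lo \<longlonglongrightarrow> 1 + x" using xp by simp
  have "hi \<longlonglongrightarrow> exp (ln (1+x) + real (q+2) * 0)" unfolding hi_def
    by (intro tendsto_intros l0)
  hence hi_lim: "hi \<longlonglongrightarrow> 1 + x" using xp by simp
  have bounds: "lo n \<le> fs q n powr (1 / real n) \<and> fs q n powr (1 / real n) \<le> hi n" if n: "n \<ge> 1" for n
  proof -
    have np: "real n > 0" using n by simp
    have qp: "real q > 0" using q by simp
    have Pp: "(1+x)^n > 0" using xp by simp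
    have low: "(1+x)^n \<le> real (n+1) * real q ^ q * fs q n" unfolding x_def by (rule fs_lower[OF q])
    have upp: "fs q n \<le> real (n+1) ^ (q+2) * (1+x)^n" unfolding x_def by (rule fs_upper[OF q n])
    have fp: "fs q n > 0"
    proof -
      have "0 < (1+x)^n" by (rule Pp)
      also note low
      finally have "0 < (real (n+1) * real q ^ q) * fs q n" .
      moreover have "real (n+1) * real q ^ q > 0" using qp by simp
      ultimately show ?thesis by (rule zero_less_mult_pos)
    qed
    have eq: "fs q n powr (1 / real n) = exp (ln (fs q n) / real n)"
      using fp by (simp add: powr_def)
    have "ln ((1+x)^n) \<le> ln (real (n+1) * real q ^ q * fs q n)"
      using low Pp by simp
    hence "real n * ln (1+x) \<le> ln (real n + 1) + real q * ln (real q) + ln (fs q n)"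
      using fp qp xp by (simp add: ln_mult ln_realpow add.commute)
    hence "(real n * ln (1+x) - ln (real n + 1) - real q * ln (real q)) / real n \<le> ln (fs q n) / real n"
      using np by (intro divide_right_mono) auto
    moreover have "ln (1+x) - l n - real q * ln (real q) / real n = (real n * ln (1+x) - ln (real n + 1) - real q * ln (real q)) / real n"
      unfolding l_def using np by (simp add: field_simps)
    ultimately have "ln (1+x) - l n - real q * ln (real q) / real n \<le> ln (fs q n) / real n" by simp
    hence lo_le: "lo n \<le> fs q n powr (1 / real n)" unfolding lo_def eq by simp
    have "ln (fs q n) \<le> ln (real (n+1) ^ (q+2) * (1+x)^n)"
      using upp fp by simp
    also have "ln (real (n+1) ^ (q+2) * (1+x)^n) = ln (real (n+1) ^ (q+2)) + ln ((1+x)^n)"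
      using xp by (simp add: ln_mult)
    also have "ln (real (n+1) ^ (q+2)) = real (q+2) * ln (real (n+1))"
      by (rule ln_realpow)
    also have "ln ((1+x)^n) = real n * ln (1+x)"
      by (rule ln_realpow)
    also have "real (n+1) = real n + 1" by simp
    finally have "ln (fs q n) \<le> real (q+2) * ln (real n + 1) + real n * ln (1+x)" .
    hence "ln (fs q n) / real n \<le> (real (q+2) * ln (real n + 1) + real n * ln (1+x)) / real n"
      using np by (intro divide_right_mono) auto
    moreover have "(real (q+2) * ln (real n + 1) + real n * ln (1+x)) / real n = ln (1+x) + real (q+2) * l n"
      unfolding l_def using np by (simp add: field_simps)
    ultimately have "ln (fs q n) / real n \<le> ln (1+x) + real (q+2) * l n" by simp
    hence hi_le: "fs q n powr (1 / real n) \<le> hi n" unfolding hi_def eq by simp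
    show ?thesis using lo_le hi_le by simp
  qed
  show ?thesis unfolding x_def[symmetric]
  proof (rule tendsto_sandwich[OF _ _ lo_lim hi_lim])
    show "\<forall>\<^sub>F n in sequentially. lo n \<le> fs q n powr (1 / real n)"
      using eventually_ge_at_top[of 1] by eventually_elim (use bounds in blast)
    show "\<forall>\<^sub>F n in sequentially. fs q n powr (1 / real n) \<le> hi n"
      using eventually_ge_at_top[of 1] by eventually_elim (use bounds in blast)
  qed
qed



lemma sdr:
  fixes Y :: "'j \<Rightarrow> 'a set"
  assumes "finite J" "\<And>j. finite (Y j)"
  shows "(\<Sum>j\<in>J. 1 / real (card (Y j) + 1)) < 1 \<Longrightarrow> \<exists>h. inj_on h J \<and> (\<forall>j\<in>J. h j \<in> Y j)"
  using assms(1)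
proof (induction J rule: finite_remove_induct)
  case empty then show ?case by simp
next
  case (remove A)
  define cY where "cY j = card (Y j)" for j
  have fin: "finite (cY ` A)" using remove.hyps by simp
  obtain j0 where j0: "j0 \<in> A" "cY j0 = Max (cY ` A)"
  proof -
    have "Max (cY ` A) \<in> cY ` A" using Max_in[OF fin] remove.hyps by auto
    then obtain j where "j \<in> A" "Max (cY ` A) = cY j" by (rule imageE)
    thus ?thesis using that by auto
  qed
  have jmax: "cY j \<le> cY j0" if "j \<in> A" for j using j0 fin that by simp
  have "(\<Sum>j\<in>A - {j0}. 1 / real (card (Y j) + 1)) \<le> (\<Sum>j\<in>A. 1 / real (card (Y j) + 1))"
    using remove.hyps by (intro sum_mono2) auto
  also have "\<dots> < 1" by (rule remove.prems)
  finally obtain h' where h': "inj_on h' (A - {j0})" "\<forall>j\<in>A - {j0}. h' j \<in> Y j"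
    using remove.IH[OF j0(1)] by blast
  have big: "card A \<le> cY j0"
  proof (rule ccontr)
    assume "\<not> card A \<le> cY j0"
    hence lt: "cY j0 + 1 \<le> card A" by simp
    have cA: "card A > 0" using remove.hyps by (simp add: card_gt_0_iff)
    have "(\<Sum>j\<in>A. 1 / real (card A)) \<le> (\<Sum>j\<in>A. 1 / real (card (Y j) + 1))"
    proof (rule sum_mono)
      fix j assume "j \<in> A"
      hence "card (Y j) + 1 \<le> card A" using jmax[of j] lt unfolding cY_def by simp
      hence "real (card (Y j) + 1) \<le> real (card A)" by (simp only: of_nat_le_iff)
      thus "1 / real (card A) \<le> 1 / real (card (Y j) + 1)"
        by (intro divide_left_mono) auto
    qed
    also have "\<dots> < 1" by (rule remove.prems)
    finally show False using cA by simp
  qed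
  have "card (h' ` (A - {j0})) \<le> card (A - {j0})" by (rule card_image_le) (use remove.hyps in simp)
  also have "\<dots> < card A" using j0(1) remove.hyps by (intro card_Diff1_less) auto
  also have "\<dots> \<le> card (Y j0)" using big unfolding cY_def .
  finally have "\<not> Y j0 \<subseteq> h' ` (A - {j0})"
    using card_mono[OF finite_imageI[of "A - {j0}" h']] remove.hyps by (metis finite_Diff not_le)
  then obtain y where y: "y \<in> Y j0" "y \<notin> h' ` (A - {j0})" by blast
  define h where "h = h'(j0 := y)"
  have "inj_on h (A - {j0}) = inj_on h' (A - {j0})" by (rule inj_on_cong) (simp add: h_def)
  hence "inj_on h (A - {j0})" using h'(1) by simp
  moreover have "h j0 \<notin> h ` (A - {j0})" unfolding h_def using y by auto
  ultimately have "inj_on h (insert j0 (A - {j0}))" using inj_on_insert[of h j0 "A - {j0}"] by simp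
  moreover have "insert j0 (A - {j0}) = A" using j0(1) by auto
  ultimately have "inj_on h A" by simp
  moreover have "\<forall>j\<in>A. h j \<in> Y j" unfolding h_def using h'(2) y by auto
  ultimately show ?case by blast
qed

lemma exists_perm:
  assumes "finite S" "B \<subseteq> S" "P \<subseteq> S" "card B = card P"
  shows "\<exists>\<tau>. \<tau> permutes S \<and> \<tau> ` B = P"
proof -
  have fB: "finite B" "finite P" using assms finite_subset by auto
  obtain g where g: "bij_betw g B P" using finite_same_card_bij[OF fB assms(4)] by blast
  have "card (S - B) = card (S - P)" using assms fB by (simp add: card_Diff_subset)
  then obtain h where h: "bij_betw h (S - B) (S - P)"
    using finite_same_card_bij assms(1) by blast
  define \<tau> where "\<tau> x = (if x \<in> B then g x else if x \<in> S then h x else x)" for x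
  have 1: "bij_betw \<tau> B P" using g by (rule bij_betw_cong[THEN iffD1, rotated]) (simp add: \<tau>_def)
  have 2: "bij_betw \<tau> (S - B) (S - P)" using h by (rule bij_betw_cong[THEN iffD1, rotated]) (simp add: \<tau>_def)
  have "bij_betw \<tau> (B \<union> (S - B)) (P \<union> (S - P))" by (rule bij_betw_combine[OF 1 2]) auto
  moreover have "B \<union> (S - B) = S" "P \<union> (S - P) = S" using assms by auto
  ultimately have "bij_betw \<tau> S S" by simp
  hence "\<tau> permutes S" by (rule bij_imp_permutes) (use assms(2) in \<open>auto simp: \<tau>_def\<close>)
  moreover have "\<tau> ` B = P" using 1 by (simp add: bij_betw_def)
  ultimately show ?thesis by blast
qed


lemma perm_fiber_card:
  assumes S: "finite S" and B: "B \<subseteq> S" and P: "P \<subseteq> S" "card P = card B"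
  shows "card {\<sigma>. \<sigma> permutes S \<and> \<sigma> ` B = P} = card {\<sigma>. \<sigma> permutes S \<and> \<sigma> ` B = B}"
proof -
  obtain \<tau> where \<tau>: "\<tau> permutes S" "\<tau> ` B = P" using exists_perm[OF S B P(1)] P(2) by metis
  have eq: "{\<sigma>. \<sigma> permutes S \<and> \<sigma> ` B = P} = (\<lambda>\<sigma>. \<tau> \<circ> \<sigma>) ` {\<sigma>. \<sigma> permutes S \<and> \<sigma> ` B = B}"
  proof (intro equalityI subsetI)
    fix \<sigma> assume "\<sigma> \<in> {\<sigma>. \<sigma> permutes S \<and> \<sigma> ` B = P}"
    hence s: "\<sigma> permutes S" "\<sigma> ` B = P" by auto
    have "inv \<tau> \<circ> \<sigma> permutes S" by (rule permutes_compose[OF s(1) permutes_inv[OF \<tau>(1)]])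
    moreover have "(inv \<tau> \<circ> \<sigma>) ` B = B"
    proof -
      have "(inv \<tau> \<circ> \<sigma>) ` B = inv \<tau> ` (\<sigma> ` B)" by (rule image_comp[symmetric])
      also have "\<dots> = inv \<tau> ` (\<tau> ` B)" using s(2) \<tau>(2) by simp
      also have "\<dots> = B" using permutes_inj[OF \<tau>(1)] by (simp add: image_inv_f_f)
      finally show ?thesis .
    qed
    moreover have "\<sigma> = \<tau> \<circ> (inv \<tau> \<circ> \<sigma>)"
      using permutes_inv_o(1)[OF \<tau>(1)] by (simp add: o_assoc)
    ultimately show "\<sigma> \<in> (\<lambda>\<sigma>. \<tau> \<circ> \<sigma>) ` {\<sigma>. \<sigma> permutes S \<and> \<sigma> ` B = B}" by blast
  next
    fix \<sigma> assume "\<sigma> \<in> (\<lambda>\<sigma>. \<tau> \<circ> \<sigma>) ` {\<sigma>. \<sigma> permutes S \<and> \<sigma> ` B = B}"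
    then obtain \<rho> where \<rho>: "\<rho> permutes S" "\<rho> ` B = B" "\<sigma> = \<tau> \<circ> \<rho>" by auto
    have "\<sigma> permutes S" unfolding \<rho>(3) by (rule permutes_compose[OF \<rho>(1) \<tau>(1)])
    moreover have "\<sigma> ` B = P"
    proof -
      have "(\<tau> \<circ> \<rho>) ` B = \<tau> ` (\<rho> ` B)" by (rule image_comp[symmetric])
      thus ?thesis unfolding \<rho>(3) using \<rho>(2) \<tau>(2) by simp
    qed
    ultimately show "\<sigma> \<in> {\<sigma>. \<sigma> permutes S \<and> \<sigma> ` B = P}" by blast
  qed
  have "inj_on (\<lambda>\<sigma>. \<tau> \<circ> \<sigma>) {\<sigma>. \<sigma> permutes S \<and> \<sigma> ` B = B}"
  proof (rule inj_onI)
    fix \<sigma>1 \<sigma>2 assume "\<tau> \<circ> \<sigma>1 = \<tau> \<circ> \<sigma>2"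
    hence "inv \<tau> \<circ> (\<tau> \<circ> \<sigma>1) = inv \<tau> \<circ> (\<tau> \<circ> \<sigma>2)" by simp
    thus "\<sigma>1 = \<sigma>2" using permutes_inv_o(2)[OF \<tau>(1)] by (simp add: o_assoc)
  qed
  thus ?thesis unfolding eq by (rule card_image)
qed

lemma avg:
  fixes S :: "'a set" and f :: "'a set \<Rightarrow> real"
  assumes S: "finite S" and q: "q > 0" and qm: "q*m \<le> card S"
  and cond: "\<And>P. \<forall>j<q. P j \<subseteq> S \<and> card (P j) = m \<Longrightarrow> \<forall>i<q. \<forall>j<q. i \<noteq> j \<longrightarrow> P i \<inter> P j = {}
              \<Longrightarrow> 1 \<le> (\<Sum>j<q. f (P j))"
  shows "real (card S choose m) \<le> real q * (\<Sum>P\<in>{P. P \<subseteq> S \<and> card P = m}. f P)"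
proof -
  define k where "k = card S"
  define Msub where "Msub = {P. P \<subseteq> S \<and> card P = m}"
  define Perms where "Perms = {\<sigma>. \<sigma> permutes S}"
  have "Msub \<subseteq> Pow S" unfolding Msub_def by auto
  hence finM: "finite Msub" using S by (rule finite_subset[OF _ finite_Pow_iff[THEN iffD2]])
  have cardM: "card Msub = k choose m" unfolding Msub_def k_def by (rule n_subsets[OF S])
  have finP: "finite Perms" unfolding Perms_def by (rule finite_permutations[OF S])
  have cardP: "card Perms = fact k" unfolding Perms_def k_def by (rule card_permutations[OF refl S])
  have "m \<le> q*m" using q by simp
  hence mk: "m \<le> k" using qm unfolding k_def by linarith
  have Cpos: "k choose m > 0" using mk by simp
  have imgM: "\<sigma> ` B \<in> Msub" if "\<sigma> \<in> Perms" "B \<in> Msub" for \<sigma> B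
  proof -
    have p: "\<sigma> permutes S" using that unfolding Perms_def by simp
    have "\<sigma> ` B \<subseteq> S" using that permutes_image[OF p] unfolding Msub_def by blast
    moreover have "card (\<sigma> ` B) = m"
      using that permutes_inj[OF p] unfolding Msub_def by (simp add: card_image inj_on_subset)
    ultimately show ?thesis unfolding Msub_def by simp
  qed
  define N where "N B = card {\<sigma>\<in>Perms. \<sigma> ` B = B}" for B
  have fiber: "(\<Sum>\<sigma>\<in>Perms. g (\<sigma> ` B)) = real (N B) * (\<Sum>P\<in>Msub. g P)" if B: "B \<in> Msub" for B and g :: "'a set \<Rightarrow> real"
  proof -
    have "(\<Sum>\<sigma>\<in>Perms. g (\<sigma> ` B)) = (\<Sum>P\<in>Msub. \<Sum>\<sigma>\<in>{\<sigma>\<in>Perms. \<sigma> ` B = P}. g (\<sigma> ` B))"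
      by (rule sum.group[symmetric]) (use finP finM imgM B in auto)
    also have "\<dots> = (\<Sum>P\<in>Msub. \<Sum>\<sigma>\<in>{\<sigma>\<in>Perms. \<sigma> ` B = P}. g P)"
      by (intro sum.cong refl) auto
    also have "\<dots> = (\<Sum>P\<in>Msub. real (N B) * g P)"
    proof (intro sum.cong refl)
      fix P assume P: "P \<in> Msub"
      have "card {\<sigma>\<in>Perms. \<sigma> ` B = P} = N B"
        unfolding N_def Perms_def mem_Collect_eq
        by (rule perm_fiber_card[OF S]) (use B P in \<open>auto simp: Msub_def\<close>)
      thus "(\<Sum>\<sigma>\<in>{\<sigma>\<in>Perms. \<sigma> ` B = P}. g P) = real (N B) * g P" by simp
    qed
    also have "\<dots> = real (N B) * (\<Sum>P\<in>Msub. g P)" by (simp add: sum_distrib_left)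
    finally show ?thesis .
  qed
  have NB: "real (N B) = real (fact k) / real (k choose m)" if "B \<in> Msub" for B
  proof -
    have "real (card Perms) = (\<Sum>\<sigma>\<in>Perms. (\<lambda>_. 1::real) (\<sigma> ` B))" by simp
    also have "\<dots> = real (N B) * (\<Sum>P\<in>Msub. 1)" by (rule fiber[OF that])
    also have "\<dots> = real (N B) * real (k choose m)" using cardM by simp
    finally show ?thesis using cardP Cpos by (simp add: field_simps)
  qed
  obtain e where e: "bij_betw e {0..<k} S" using ex_bij_betw_nat_finite[OF S] unfolding k_def by blast
  define B where "B j = e ` {j*m..<j*m+m}" for j
  have Bsub: "{j*m..<j*m+m} \<subseteq> {0..<k}" if "j < q" for j
  proof -
    have "j*m+m = Suc j * m" by simp
    also have "\<dots> \<le> q*m" using that by (intro mult_le_mono1) simp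
    finally show ?thesis using qm unfolding k_def by auto
  qed
  have BM: "B j \<in> Msub" if "j < q" for j
  proof -
    have "B j \<subseteq> S" unfolding B_def using Bsub[OF that] e by (auto simp: bij_betw_def)
    moreover have "card (B j) = m" unfolding B_def
      using Bsub[OF that] e by (subst card_image) (auto simp: bij_betw_def intro: inj_on_subset)
    ultimately show ?thesis unfolding Msub_def by simp
  qed
  have Bdisj: "B i \<inter> B j = {}" if "i < q" "j < q" "i \<noteq> j" for i j
  proof -
    have "{i*m..<i*m+m} \<inter> {j*m..<j*m+m} = {}"
    proof (cases "i < j")
      case True
      hence "Suc i * m \<le> j * m" by (intro mult_le_mono1) simp
      thus ?thesis by auto
    next
      case False
      hence "Suc j * m \<le> i * m" using that by (intro mult_le_mono1) simp
      thus ?thesis by auto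
    qed
    moreover have "e ` ({i*m..<i*m+m} \<inter> {j*m..<j*m+m}) = B i \<inter> B j"
      unfolding B_def
    proof (rule inj_on_image_Int)
      show "inj_on e {0..<k}" using e by (simp add: bij_betw_def)
    qed (use Bsub that in auto)
    ultimately show ?thesis by (metis image_empty)
  qed
  have "real (card Perms) = (\<Sum>\<sigma>\<in>Perms. 1)" by simp
  also have "\<dots> \<le> (\<Sum>\<sigma>\<in>Perms. \<Sum>j<q. f (\<sigma> ` B j))"
  proof (rule sum_mono)
    fix \<sigma> assume s: "\<sigma> \<in> Perms"
    hence p: "\<sigma> permutes S" unfolding Perms_def by simp
    show "1 \<le> (\<Sum>j<q. f (\<sigma> ` B j))"
    proof (rule cond)
      show "\<forall>j<q. \<sigma> ` B j \<subseteq> S \<and> card (\<sigma> ` B j) = m"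
        using imgM[OF s BM] unfolding Msub_def by auto
      show "\<forall>i<q. \<forall>j<q. i \<noteq> j \<longrightarrow> \<sigma> ` B i \<inter> \<sigma> ` B j = {}"
      proof (intro allI impI)
        fix i j assume ij: "i < q" "j < q" "i \<noteq> j"
        have "\<sigma> ` B i \<inter> \<sigma> ` B j = \<sigma> ` (B i \<inter> B j)"
          by (rule image_Int[symmetric]) (rule permutes_inj[OF p])
        thus "\<sigma> ` B i \<inter> \<sigma> ` B j = {}" using Bdisj[OF ij] by simp
      qed
    qed
  qed
  also have "\<dots> = (\<Sum>j<q. \<Sum>\<sigma>\<in>Perms. f (\<sigma> ` B j))" by (rule sum.swap)
  also have "\<dots> = (\<Sum>j<q. real (fact k) / real (k choose m) * (\<Sum>P\<in>Msub. f P))"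
    by (intro sum.cong refl) (simp add: fiber[OF BM] NB[OF BM])
  also have "\<dots> = real q * (real (fact k) / real (k choose m) * (\<Sum>P\<in>Msub. f P))" by simp
  finally have "real (fact k) * real (k choose m) \<le> real (fact k) * (real q * (\<Sum>P\<in>Msub. f P))"
    using cardP Cpos by (simp add: field_simps)
  hence "real (k choose m) \<le> real q * (\<Sum>P\<in>Msub. f P)"
    by (subst (asm) mult_le_cancel_left_pos) auto
  thus ?thesis unfolding k_def Msub_def .
qed



definition supp :: "bool \<Rightarrow> bool list \<Rightarrow> nat set" where
  "supp b x = {i. i < length x \<and> x ! i = b}"

lemma finite_cube: "finite (cube n)"
proof -
  have "cube n = {xs. set xs \<subseteq> (UNIV :: bool set) \<and> length xs = n}" unfolding cube_def by auto
  thus ?thesis using finite_lists_length_eq[of "UNIV :: bool set" n] by simp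
qed

lemma focal_build:
  assumes r: "r \<ge> 3" and x: "x \<in> G" and G: "G \<subseteq> cube n"
  and disj: "\<forall>i<r-1. \<forall>j<r-1. i \<noteq> j \<longrightarrow> P i \<inter> P j = {}"
  and h: "inj_on h {..<r-1}" "\<forall>j<r-1. h j \<in> G - {x} \<and> supp b x - P j \<subseteq> supp b (h j)"
  shows "contains_focal b r n G"
proof -
  define q where "q = r - 1"
  define xs where "xs = map h [0..<q]"
  have len: "length xs = q" unfolding xs_def by simp
  have xsj: "xs ! j = h j" if "j < q" for j unfolding xs_def using that by simp
  have setxs: "set xs = h ` {..<q}" unfolding xs_def by (simp add: atLeast0LessThan)
  have lx: "length x = n" using x G unfolding cube_def by auto
  have "distinct (x # xs)"
  proof -
    have "x \<notin> set xs" unfolding setxs using h(2) unfolding q_def by auto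
    moreover have "distinct xs" unfolding xs_def using h(1) unfolding q_def
      by (simp add: distinct_map atLeast0LessThan)
    ultimately show ?thesis by simp
  qed
  moreover have "length xs - 1 \<le> card {j. j < length xs \<and> (xs ! j) ! i = b}"
    if i: "i < n" "x ! i = b" for i
  proof -
    define Good where "Good = {j. j < q \<and> h j ! i = b}"
    define Bad where "Bad = {j. j < q \<and> h j ! i \<noteq> b}"
    have iS: "i \<in> supp b x" unfolding supp_def using i lx by simp
    have BadP: "Bad \<subseteq> {j. j < q \<and> i \<in> P j}"
    proof
      fix j assume "j \<in> Bad"
      hence j: "j < q" "h j ! i \<noteq> b" unfolding Bad_def by auto
      have "i \<notin> supp b (h j)" using j(2) unfolding supp_def by simp
      hence "i \<in> P j" using h(2) j(1) iS unfolding q_def by blast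
      thus "j \<in> {j. j < q \<and> i \<in> P j}" using j by simp
    qed
    have "card {j. j < q \<and> i \<in> P j} \<le> Suc 0"
      by (subst card_le_Suc0_iff_eq) (use disj in \<open>auto simp: q_def\<close>)
    hence cB: "card Bad \<le> 1" using card_mono[OF _ BadP] by simp
    have "{..<q} = Good \<union> Bad" "Good \<inter> Bad = {}" unfolding Good_def Bad_def by auto
    hence "card Good + card Bad = q"
      by (metis card_Un_disjoint card_lessThan finite_Un finite_lessThan)
    hence "q - 1 \<le> card Good" using cB by linarith
    moreover have "{j. j < length xs \<and> (xs ! j) ! i = b} = Good"
      unfolding Good_def len using xsj by auto
    ultimately show ?thesis using len by simp
  qed
  ultimately have "is_focal b n x xs" unfolding is_focal_def by blast
  moreover have "set xs \<subseteq> G" unfolding setxs using h(2) unfolding q_def by auto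
  ultimately show ?thesis unfolding contains_focal_def using x len unfolding q_def by blast
qed


lemma supp_sub: "x \<in> cube n \<Longrightarrow> supp b x \<subseteq> {..<n}"
  unfolding supp_def cube_def by auto

lemma layer:
  assumes r: "r \<ge> 3" and G: "G \<subseteq> cube n" and nf: "\<not> contains_focal b r n G"
    and kk: "\<forall>x\<in>G. card (supp b x) = k"
  shows "real (card G) * real (k choose (k - k div (r-1))) \<le> real (r-1) * real (n choose (k - k div (r-1)))"
proof -
  define q where "q = r - 1"
  define m where "m = k div q"
  define c where "c = k - m"
  have q2: "q \<ge> 2" unfolding q_def using r by simp
  have finG: "finite G" using finite_subset[OF G finite_cube] .
  define d where "d A = card {y\<in>G. A \<subseteq> supp b y}" for A
  define Csub where "Csub S = {A. A \<subseteq> S \<and> card A = c}" for S :: "nat set"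
  have per: "real (k choose c) / real q \<le> (\<Sum>A\<in>Csub (supp b x). 1 / real (d A))" if x: "x \<in> G" for x
  proof -
    define S where "S = supp b x"
    have finS: "finite S" unfolding S_def supp_def by simp
    have cS: "card S = k" unfolding S_def using kk x by simp
    have "k = q * m + k mod q" unfolding m_def by simp
    hence qm: "q * m \<le> card S" unfolding cS by linarith
    have "m \<le> q * m" using q2 by simp
    hence mk: "m \<le> k" using qm cS by linarith
    define f where "f P = 1 / real (d (S - P))" for P
    have cond: "1 \<le> (\<Sum>j<q. f (P j))"
      if P1: "\<forall>j<q. P j \<subseteq> S \<and> card (P j) = m" and P2: "\<forall>i<q. \<forall>j<q. i \<noteq> j \<longrightarrow> P i \<inter> P j = {}" for P
    proof (rule ccontr)
      assume "\<not> 1 \<le> (\<Sum>j<q. f (P j))"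
      hence lt: "(\<Sum>j<q. f (P j)) < 1" by simp
      define Y where "Y j = {y\<in>G. S - P j \<subseteq> supp b y} - {x}" for j
      have finY: "finite (Y j)" for j unfolding Y_def using finG by simp
      have dY: "d (S - P j) = card (Y j) + 1" for j
      proof -
        have xin: "x \<in> {y\<in>G. S - P j \<subseteq> supp b y}" using x unfolding S_def by auto
        have fin: "finite {y\<in>G. S - P j \<subseteq> supp b y}" using finG by simp
        have "card (Y j) = card {y\<in>G. S - P j \<subseteq> supp b y} - 1"
          unfolding Y_def by (rule card_Diff_singleton[OF xin])
        moreover have "card {y\<in>G. S - P j \<subseteq> supp b y} \<ge> 1"
          using xin fin by (metis One_nat_def Suc_leI card_gt_0_iff empty_iff)
        ultimately show ?thesis unfolding d_def by simp
      qed
      have "(\<Sum>j\<in>{..<q}. 1 / real (card (Y j) + 1)) < 1"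
        using lt unfolding f_def dY by simp
      then obtain h where h: "inj_on h {..<q}" "\<forall>j\<in>{..<q}. h j \<in> Y j"
        using sdr[of "{..<q}" Y] finY by blast
      have "contains_focal b r n G"
      proof (rule focal_build[OF r x G])
        show "\<forall>i<r-1. \<forall>j<r-1. i \<noteq> j \<longrightarrow> P i \<inter> P j = {}" using P2 unfolding q_def .
        show "inj_on h {..<r-1}" using h(1) unfolding q_def .
        show "\<forall>j<r-1. h j \<in> G - {x} \<and> supp b x - P j \<subseteq> supp b (h j)"
          using h(2) unfolding Y_def S_def q_def by auto
      qed
      with nf show False by contradiction
    qed
    have av: "real (card S choose m) \<le> real q * (\<Sum>P\<in>{P. P \<subseteq> S \<and> card P = m}. f P)"
      by (rule avg[OF finS _ qm]) (use q2 cond in auto)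
    have bij: "bij_betw (\<lambda>P. S - P) {P. P \<subseteq> S \<and> card P = m} (Csub S)"
    proof (rule bij_betw_byWitness[where f' = "\<lambda>A. S - A"])
      show "\<forall>a\<in>{P. P \<subseteq> S \<and> card P = m}. S - (S - a) = a" by auto
      show "\<forall>a\<in>Csub S. S - (S - a) = a" unfolding Csub_def by auto
      show "(\<lambda>P. S - P) ` {P. P \<subseteq> S \<and> card P = m} \<subseteq> Csub S"
        unfolding Csub_def c_def using finS cS by (auto simp: card_Diff_subset finite_subset)
      show "(\<lambda>A. S - A) ` Csub S \<subseteq> {P. P \<subseteq> S \<and> card P = m}"
        unfolding Csub_def c_def using finS cS mk by (auto simp: card_Diff_subset finite_subset)
    qed
    have "(\<Sum>P\<in>{P. P \<subseteq> S \<and> card P = m}. f P) = (\<Sum>A\<in>Csub S. 1 / real (d A))"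
      unfolding f_def by (rule sum.reindex_bij_betw[OF bij])
    moreover have "k choose m = k choose c" unfolding c_def using mk by (rule binomial_symmetric)
    ultimately have "real (k choose c) \<le> real q * (\<Sum>A\<in>Csub S. 1 / real (d A))"
      using av cS by simp
    thus ?thesis unfolding S_def using q2 by (simp add: divide_simps mult.commute)
  qed
  define Cn where "Cn = {A. A \<subseteq> {..<n} \<and> card A = c}"
  have finCn: "finite Cn"
  proof -
    have "Cn \<subseteq> Pow {..<n}" unfolding Cn_def by auto
    thus ?thesis by (rule finite_subset) simp
  qed
  have cardCn: "card Cn = n choose c" unfolding Cn_def using n_subsets[of "{..<n}" c] by simp
  have "(\<Sum>x\<in>G. real (k choose c) / real q) \<le> (\<Sum>x\<in>G. \<Sum>A\<in>Csub (supp b x). 1 / real (d A))"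
    by (rule sum_mono) (rule per)
  also have "\<dots> = (\<Sum>x\<in>G. \<Sum>A\<in>Cn. if A \<subseteq> supp b x then 1 / real (d A) else 0)"
  proof (rule sum.cong[OF refl])
    fix x assume x: "x \<in> G"
    have "{A\<in>Cn. A \<subseteq> supp b x} = Csub (supp b x)"
      unfolding Cn_def Csub_def using supp_sub[of x n b] x G by auto
    thus "(\<Sum>A\<in>Csub (supp b x). 1 / real (d A)) = (\<Sum>A\<in>Cn. if A \<subseteq> supp b x then 1 / real (d A) else 0)"
      using sum.inter_filter[OF finCn, of "\<lambda>A. 1 / real (d A)" "\<lambda>A. A \<subseteq> supp b x"] by simp
  qed
  also have "\<dots> = (\<Sum>A\<in>Cn. \<Sum>x\<in>G. if A \<subseteq> supp b x then 1 / real (d A) else 0)"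
    by (rule sum.swap)
  also have "\<dots> \<le> (\<Sum>A\<in>Cn. 1)"
  proof (rule sum_mono)
    fix A assume "A \<in> Cn"
    have "(\<Sum>x\<in>G. if A \<subseteq> supp b x then 1 / real (d A) else 0) = real (d A) * (1 / real (d A))"
      using sum.inter_filter[OF finG, of "\<lambda>_. 1 / real (d A)" "\<lambda>x. A \<subseteq> supp b x"] unfolding d_def by simp
    also have "\<dots> \<le> 1" by (cases "d A = 0") auto
    finally show "(\<Sum>x\<in>G. if A \<subseteq> supp b x then 1 / real (d A) else 0) \<le> 1" .
  qed
  also have "\<dots> = real (n choose c)" using cardCn by simp
  finally have "real (card G) * (real (k choose c) / real q) \<le> real (n choose c)" by simp
  hence "real (card G) * real (k choose c) \<le> real q * real (n choose c)"
    using q2 by (simp add: divide_simps mult.commute)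
  thus ?thesis unfolding c_def m_def q_def .
qed


lemma contains_focal_mono: "F \<subseteq> F' \<Longrightarrow> contains_focal b r n F \<Longrightarrow> contains_focal b r n F'"
  unfolding contains_focal_def by blast

lemma ceil_c:
  assumes q: "q \<ge> 2"
  shows "nat \<lceil>real (q - 1) * real k / real q\<rceil> = k - k div q"
proof -
  define m where "m = k div q"
  define s where "s = k mod q"
  have kq: "k = q*m + s" unfolding m_def s_def by simp
  have sq: "s < q" unfolding s_def using q by simp
  have mqm: "m \<le> q*m" using q by simp
  have c: "k - k div q = (q-1)*m + s" unfolding m_def[symmetric] using kq mqm
    by (simp add: diff_mult_distrib)
  have rk: "real k = real q * real m + real s" unfolding kq by simp
  have rq1: "real (q-1) = real q - 1" using q by (simp add: of_nat_diff)
  have qp: "real q > 0" using q by simp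
  have sq': "real s < real q" using sq by simp
  have "\<lceil>real (q - 1) * real k / real q\<rceil> = int ((q-1)*m + s)"
  proof (rule ceiling_unique)
    show "real_of_int (int ((q-1)*m + s)) - 1 < real (q - 1) * real k / real q"
      unfolding rk rq1 using qp sq' q by (simp add: field_simps of_nat_diff)
    show "real (q - 1) * real k / real q \<le> real_of_int (int ((q-1)*m + s))"
      unfolding rk rq1 using qp sq' q by (simp add: field_simps of_nat_diff)
  qed
  thus ?thesis unfolding c by (simp only: nat_int)
qed

lemma focal_sum_fs:
  assumes r: "r \<ge> 3"
  shows "focal_sum r n = fs (r-1) n"
proof -
  have "r - 2 = (r-1) - 1" by simp
  hence "nat \<lceil>real (r - 2) * real k / real (r - 1)\<rceil> = k - k div (r-1)" for k
    using ceil_c[of "r-1" k] r by simp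
  thus ?thesis unfolding focal_sum_def fs_def Let_def by simp
qed

lemma gff_bound:
  assumes r: "r \<ge> 3"
  shows "real (g_ff b r n) \<le> real (r - 1) * focal_sum r n"
proof -
  define q where "q = r - 1"
  define Cards where "Cards = {card F | F. F \<subseteq> cube n \<and> \<not> contains_focal b r n F}"
  have "Cards \<subseteq> {..card (cube n)}" unfolding Cards_def using finite_cube by (auto intro: card_mono)
  hence finC: "finite Cards" by (rule finite_subset) simp
  have "({} :: bool list set) \<subseteq> cube n \<and> \<not> contains_focal b r n {}" unfolding contains_focal_def by simp
  hence "card ({} :: bool list set) \<in> Cards" unfolding Cards_def by blast
  hence neC: "Cards \<noteq> {}" by blast
  have "g_ff b r n \<in> Cards" unfolding g_ff_def Cards_def[symmetric] using Max_in[OF finC neC] .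
  then obtain F where F: "g_ff b r n = card F" "F \<subseteq> cube n" "\<not> contains_focal b r n F"
    unfolding Cards_def by blast
  have finF: "finite F" using finite_subset[OF F(2) finite_cube] .
  define Fk where "Fk k = {x\<in>F. card (supp b x) = k}" for k
  have img: "(\<lambda>x. card (supp b x)) ` F \<subseteq> {0..n}"
  proof
    fix y assume "y \<in> (\<lambda>x. card (supp b x)) ` F"
    then obtain x where x: "x \<in> F" "y = card (supp b x)" by blast
    have "card (supp b x) \<le> card {..<n}" using supp_sub[of x n b] x F(2) by (intro card_mono) auto
    thus "y \<in> {0..n}" using x by simp
  qed
  have "real (card F) = (\<Sum>x\<in>F. 1)" by simp
  also have "\<dots> = (\<Sum>k\<in>{0..n}. \<Sum>x\<in>{x\<in>F. card (supp b x) = k}. 1)"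
    by (rule sum.group[symmetric, OF finF _ img]) simp
  also have "\<dots> = (\<Sum>k=0..n. real (card (Fk k)))" unfolding Fk_def by simp
  also have "\<dots> \<le> (\<Sum>k=0..n. real q * (real (n choose (k - k div q)) / real (k choose (k - k div q))))"
  proof (rule sum_mono)
    fix k assume "k \<in> {0..n}"
    have sub: "Fk k \<subseteq> F" unfolding Fk_def by auto
    have "real (card (Fk k)) * real (k choose (k - k div q)) \<le> real q * real (n choose (k - k div q))"
      unfolding q_def
    proof (rule layer[OF r])
      show "Fk k \<subseteq> cube n" using sub F(2) by blast
      show "\<not> contains_focal b r n (Fk k)" using contains_focal_mono[OF sub] F(3) by blast
      show "\<forall>x\<in>Fk k. card (supp b x) = k" unfolding Fk_def by simp
    qed
    moreover have "real (k choose (k - k div q)) > 0" by simp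
    ultimately show "real (card (Fk k)) \<le> real q * (real (n choose (k - k div q)) / real (k choose (k - k div q)))"
      by (simp add: divide_simps)
  qed
  also have "\<dots> = real q * fs q n" unfolding fs_def by (simp add: sum_distrib_left)
  finally show ?thesis unfolding F(1) q_def focal_sum_fs[OF r] .
qed

theorem corollary5p3:
  fixes r :: nat and b :: bool
  assumes "r \<ge> 3"
  shows "(\<forall>n\<ge>1. real (g_ff b r n) \<le> real (r - 1) * focal_sum r n) \<and>
         ((\<lambda>n. focal_sum r n powr (1 / real n)) \<longlongrightarrow>
            1 + real (r - 2) / (real (r - 1) powr (real (r - 1) / real (r - 2)))) at_top"
proof
  show "\<forall>n\<ge>1. real (g_ff b r n) \<le> real (r - 1) * focal_sum r n"
    using gff_bound[OF assms] by blast
  have q2: "r - 1 \<ge> 2" using assms by simp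
  have "(\<lambda>n. fs (r-1) n powr (1 / real n)) \<longlonglongrightarrow> 1 + xq (r-1)" by (rule fs_lim[OF q2])
  moreover have "xq (r-1) = real (r - 2) / (real (r - 1) powr (real (r - 1) / real (r - 2)))"
  proof -
    have "r - 1 - 1 = r - 2" by simp
    thus ?thesis unfolding xq_def by simp
  qed
  moreover have "focal_sum r n = fs (r-1) n" for n by (rule focal_sum_fs[OF assms])
  ultimately show "((\<lambda>n. focal_sum r n powr (1 / real n)) \<longlongrightarrow>
            1 + real (r - 2) / (real (r - 1) powr (real (r - 1) / real (r - 2)))) at_top"
    by simp
qed


end
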